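(* Let $\mathbb X=\ell^\infty(\mathbb C)$, the real Banach space of bounded complex sequences $(x_k)_{k\in\mathbb N}$ with the supremum norm. For $t\in[0,1]$ define $g_t((x_k))=(t\,x_k e^{i\pi/(2k)})$ and $f_t((x_k))=(\tfrac t4x_k+1-\tfrac t4)$, and let $F^g_t=\{f_t,g_t\}$. For $t\in[0,1)$ both maps are contractions, so $F^g_t$ has a unique attractor $A_t$ (nonempty compact with $A_t=f_t(A_t)\cup g_t(A_t)$). Then there is no sequence $t_n\in[0,1)$ with $t_n\to1$ such that $(A_{t_n})$ converges in the Hausdorff metric; in particular $F^g_t$ has no upper transition attractor. More precisely, for every $s\in[\tfrac12,1)$ there is $t_0<1$ such that $h(A_t,A_s)\ge\tfrac12$ for all $t\in[t_0,1)$.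
   Context: $h$ denotes the Hausdorff metric on nonempty compact subsets of $\mathbb X$. An upper transition attractor of $F^g_t$ is a compact set $A^\bullet$ for which there is an increasing sequence $t_n\in[0,1)$, $t_n\to1$, with $h(A_{t_n},A^\bullet)\to0$. *)

theory Defs
  imports "HOL-Analysis.Analysis"
begin

text \<open>The space X = l-infinity(C): bounded (automatically continuous, nat being discrete)
  complex sequences, a real Banach space with the sup norm.  Index k of the paper
  (k = 1,2,...) corresponds to index k - 1 here, i.e. coordinate n :: nat stands for k = n+1.\<close>
type_synonym linf = "nat \<Rightarrow>\<^sub>C complex"

definition hausdorff_dist :: "'a::metric_space set \<Rightarrow> 'a set \<Rightarrow> real" where
  "hausdorff_dist A B = max (SUP a\<in>A. infdist a B) (SUP b\<in>B. infdist b A)"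

definition g_map :: "real \<Rightarrow> linf \<Rightarrow> linf" where
  "g_map t x = Bcontfun (\<lambda>n. complex_of_real t * apply_bcontfun x n
                                * cis (pi / (2 * real (n + 1))))"

definition f_map :: "real \<Rightarrow> linf \<Rightarrow> linf" where
  "f_map t x = Bcontfun (\<lambda>n. complex_of_real (t / 4) * apply_bcontfun x n
                                + complex_of_real (1 - t / 4))"

definition attractor :: "real \<Rightarrow> linf set" where
  "attractor t = (THE A. A \<noteq> {} \<and> compact A \<and> A = f_map t ` A \<union> g_map t ` A)"

end

theory Submission
  imports Defs
begin


definition e1 :: linf where "e1 = Bcontfun (\<lambda>n. 1)"

lemma e1_apply[simp]: "apply_bcontfun e1 n = 1"
  unfolding e1_def by (simp add: Bcontfun_inverse const_bcontfun)

lemma f_apply[simp]: "apply_bcontfun (f_map t x) n = complex_of_real (t/4) * apply_bcontfun x n + complex_of_real (1 - t/4)"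
proof -
  have "(\<lambda>n. complex_of_real (t / 4) * apply_bcontfun x n + complex_of_real (1 - t / 4)) \<in> bcontfun"
  proof (rule bcontfun_normI)
    fix n
    have "cmod (complex_of_real (t / 4) * apply_bcontfun x n + complex_of_real (1 - t / 4))
       \<le> cmod (complex_of_real (t / 4) * apply_bcontfun x n) + cmod (complex_of_real (1 - t / 4))"
      by (rule norm_triangle_ineq)
    also have "\<dots> = \<bar>t/4\<bar> * cmod (apply_bcontfun x n) + \<bar>1 - t/4\<bar>"
      by (simp only: norm_mult norm_of_real)
    also have "\<dots> \<le> \<bar>t/4\<bar> * norm x + \<bar>1 - t/4\<bar>"
      by (simp add: mult_left_mono norm_bounded)
    finally show "cmod (complex_of_real (t / 4) * apply_bcontfun x n + complex_of_real (1 - t / 4)) \<le> \<bar>t/4\<bar> * norm x + \<bar>1 - t/4\<bar>" .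
  qed simp
  then show ?thesis unfolding f_map_def by (simp add: Bcontfun_inverse)
qed

lemma g_apply[simp]: "apply_bcontfun (g_map t x) n = complex_of_real t * apply_bcontfun x n * cis (pi / (2 * real (n + 1)))"
proof -
  have "(\<lambda>n. complex_of_real t * apply_bcontfun x n * cis (pi / (2 * real (n + 1)))) \<in> bcontfun"
  proof (rule bcontfun_normI)
    fix n
    show "cmod (complex_of_real t * apply_bcontfun x n * cis (pi / (2 * real (n + 1)))) \<le> \<bar>t\<bar> * norm x"
      by (simp add: norm_mult mult_left_mono norm_bounded)
  qed simp
  then show ?thesis unfolding g_map_def by (simp add: Bcontfun_inverse)
qed

lemma f_dist: "0 \<le> t \<Longrightarrow> dist (f_map t x) (f_map t y) \<le> t * dist x y"
proof (rule dist_bound)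
  fix n assume t: "0 \<le> t"
  have "dist (apply_bcontfun (f_map t x) n) (apply_bcontfun (f_map t y) n)
     = t/4 * dist (apply_bcontfun x n) (apply_bcontfun y n)"
  proof -
    have "apply_bcontfun (f_map t x) n - apply_bcontfun (f_map t y) n = complex_of_real (t/4) * (apply_bcontfun x n - apply_bcontfun y n)"
      by (simp add: algebra_simps)
    then show ?thesis using t by (simp only: dist_norm norm_mult norm_of_real)
  qed
  also have "\<dots> \<le> t * dist x y"
  proof -
    have a: "t * dist (apply_bcontfun x n) (apply_bcontfun y n) \<le> t * dist x y"
      by (rule mult_left_mono[OF dist_bounded t])
    have "0 \<le> t * dist (apply_bcontfun x n) (apply_bcontfun y n)" using t by simp
    with a show ?thesis by simp
  qed
  finally show "dist (apply_bcontfun (f_map t x) n) (apply_bcontfun (f_map t y) n) \<le> t * dist x y" .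
qed

lemma g_dist: "0 \<le> t \<Longrightarrow> dist (g_map t x) (g_map t y) \<le> t * dist x y"
proof (rule dist_bound)
  fix n assume t: "0 \<le> t"
  have "dist (apply_bcontfun (g_map t x) n) (apply_bcontfun (g_map t y) n)
     = t * dist (apply_bcontfun x n) (apply_bcontfun y n)"
    using t by (simp add: dist_norm norm_mult flip: right_diff_distrib left_diff_distrib)
  also have "\<dots> \<le> t * dist x y"
    using t dist_bounded[of x n y] by (simp add: mult_left_mono)
  finally show "dist (apply_bcontfun (g_map t x) n) (apply_bcontfun (g_map t y) n) \<le> t * dist x y" .
qed

lemma lip_cont: assumes "0 \<le> c" "\<And>x y. dist (h x) (h y) \<le> c * dist x y"
  shows "continuous_on S h"
  by (rule lipschitz_on_continuous_on[of c]) (use assms in \<open>auto intro!: lipschitz_onI\<close>)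

lemma f_cont: "0 \<le> t \<Longrightarrow> continuous_on S (f_map t)"
  using lip_cont[of t "f_map t"] f_dist by blast
lemma g_cont: "0 \<le> t \<Longrightarrow> continuous_on S (g_map t)"
  using lip_cont[of t "g_map t"] g_dist by blast

lemma f_e1: "f_map t e1 = e1"
  by (rule bcontfun_eqI) (simp flip: of_real_mult of_real_add)




primrec Lv :: "real \<Rightarrow> nat \<Rightarrow> linf set" where
  "Lv t 0 = {e1}"
| "Lv t (Suc n) = f_map t ` Lv t n \<union> g_map t ` Lv t n"

definition orb :: "real \<Rightarrow> linf set" where "orb t = (\<Union>n. Lv t n)"

lemma Lv_finite: "finite (Lv t n)"
  by (induction n) auto

lemma Lv_coord: assumes "0 \<le> t" "t \<le> 1" shows "x \<in> Lv t n \<Longrightarrow> cmod (apply_bcontfun x k) \<le> 1"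
proof (induction n arbitrary: x)
  case 0 then show ?case by simp
next
  case (Suc n)
  then obtain y where y: "y \<in> Lv t n" and x: "x = f_map t y \<or> x = g_map t y" by auto
  have yk: "cmod (apply_bcontfun y k) \<le> 1" using Suc.IH y by blast
  show ?case
  proof (cases "x = f_map t y")
    case True
    have "cmod (apply_bcontfun x k) \<le> cmod (complex_of_real (t/4) * apply_bcontfun y k) + cmod (complex_of_real (1 - t/4))"
      using True by (simp only: f_apply norm_triangle_ineq)
    also have "\<dots> = t/4 * cmod (apply_bcontfun y k) + (1 - t/4)"
      using assms by (simp only: norm_mult norm_of_real)
    also have "\<dots> \<le> t/4 * 1 + (1 - t/4)"
      using assms yk by (intro add_right_mono mult_left_mono) auto
    finally show ?thesis by simp
  next
    case False
    then have "x = g_map t y" using x by blast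
    then have "cmod (apply_bcontfun x k) = t * cmod (apply_bcontfun y k)"
      using assms by (simp add: norm_mult)
    also have "\<dots> \<le> 1 * 1" using assms yk by (intro mult_mono) auto
    finally show ?thesis by simp
  qed
qed

lemma Lv_norm: "0 \<le> t \<Longrightarrow> t \<le> 1 \<Longrightarrow> x \<in> Lv t n \<Longrightarrow> norm x \<le> 1"
  by (rule norm_bound) (rule Lv_coord)

lemma orb_norm: "0 \<le> t \<Longrightarrow> t \<le> 1 \<Longrightarrow> x \<in> orb t \<Longrightarrow> norm x \<le> 1"
  unfolding orb_def using Lv_norm by blast

lemma e1_norm: "norm e1 \<le> 1"
  by (rule norm_bound) simp

lemma Lv_approx:
  assumes "0 \<le> t" "t \<le> 1"
  shows "x \<in> Lv t n \<Longrightarrow> \<exists>z\<in>(\<Union>m\<le>N. Lv t m). dist x z \<le> 2 * t^N"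
proof (induction N arbitrary: n x)
  case 0
  have "dist x e1 \<le> norm x + norm e1" by (simp add: dist_norm norm_triangle_ineq4)
  also have "\<dots> \<le> 2" using Lv_norm[OF assms 0] e1_norm by simp
  finally show ?case by force
next
  case (Suc N)
  show ?case
  proof (cases n)
    case 0
    then have "x = e1" using Suc.prems by simp
    have "e1 \<in> (\<Union>m\<le>Suc N. Lv t m)" by (rule UN_I[of 0]) auto
    then show ?thesis using \<open>x = e1\<close> assms by (intro bexI[of _ e1]) auto
  next
    case (Suc n')
    then obtain y where y: "y \<in> Lv t n'" and x: "x = f_map t y \<or> x = g_map t y"
      using Suc.prems by auto
    from Suc.IH[OF y] obtain z m where z: "z \<in> Lv t m" "m \<le> N" and d: "dist y z \<le> 2 * t^N" by auto
    show ?thesis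
    proof (cases "x = f_map t y")
      case True
      have "f_map t z \<in> Lv t (Suc m)" using z by simp
      moreover have "dist x (f_map t z) \<le> 2 * t ^ Suc N"
      proof -
        have "dist x (f_map t z) \<le> t * dist y z" using True f_dist[OF assms(1)] by simp
        also have "\<dots> \<le> t * (2 * t^N)" using d assms by (intro mult_left_mono) auto
        finally show ?thesis by simp
      qed
      moreover have "Suc m \<le> Suc N" using z by simp
      ultimately show ?thesis by blast
    next
      case False
      then have xg: "x = g_map t y" using x by blast
      have "g_map t z \<in> Lv t (Suc m)" using z by simp
      moreover have "dist x (g_map t z) \<le> 2 * t ^ Suc N"
      proof -
        have "dist x (g_map t z) \<le> t * dist y z" using xg g_dist[OF assms(1)] by simp
        also have "\<dots> \<le> t * (2 * t^N)" using d assms by (intro mult_left_mono) auto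
        finally show ?thesis by simp
      qed
      moreover have "Suc m \<le> Suc N" using z by simp
      ultimately show ?thesis by blast
    qed
  qed
qed

lemma complete_linf: assumes "closed (S::linf set)" shows "complete S"
proof (rule completeI)
  fix f :: "nat \<Rightarrow> linf" assume f: "\<forall>n. f n \<in> S" "Cauchy f"
  obtain g where "uniform_limit UNIV (\<lambda>n. apply_bcontfun (f n)) g sequentially"
    using f(2) uniformly_convergent_eq_cauchy[of "\<lambda>_. True" "\<lambda>n. apply_bcontfun (f n)"]
    unfolding Cauchy_def uniform_limit_sequentially_iff
    by (metis dist_fun_lt_imp_dist_val_lt)
  from uniform_limit_bcontfunE[OF this sequentially_bot]
  obtain l where l: "f \<longlonglongrightarrow> l" by metis
  have "l \<in> S" using closed_sequentially[OF assms _ l] f(1) by blast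
  with l show "\<exists>l\<in>S. f \<longlonglongrightarrow> l" by blast
qed

lemma compact_cl_orb:
  assumes "0 \<le> t" "t < 1"
  shows "compact (closure (orb t))"
  unfolding compact_eq_totally_bounded
proof (intro conjI allI impI)
  show "complete (closure (orb t))" by (rule complete_linf) simp
next
  fix e :: real assume e: "0 < e"
  obtain N where N: "t^N < e/4" using real_arch_pow_inv[of "e/4" t] e assms by auto
  let ?k = "\<Union>m\<le>N. Lv t m"
  have "finite ?k" by (simp add: Lv_finite)
  moreover have "closure (orb t) \<subseteq> (\<Union>x\<in>?k. ball x e)"
  proof
    fix x assume "x \<in> closure (orb t)"
    then obtain y where y: "y \<in> orb t" "dist y x < e/2"
      using e by (metis closure_approachable half_gt_zero)
    then obtain n where "y \<in> Lv t n" unfolding orb_def by auto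
    moreover have "t \<le> 1" using assms by simp
    ultimately obtain z where z: "z \<in> ?k" "dist y z \<le> 2 * t^N"
      using Lv_approx[OF assms(1)] by blast
    have "dist z x \<le> dist z y + dist y x" by (rule dist_triangle)
    also have "\<dots> < e" using z y N by (simp add: dist_commute)
    finally show "x \<in> (\<Union>x\<in>?k. ball x e)" using z by auto
  qed
  ultimately show "\<exists>k. finite k \<and> closure (orb t) \<subseteq> (\<Union>x\<in>k. ball x e)" by blast
qed

lemma orb_eq: "orb t = f_map t ` orb t \<union> g_map t ` orb t"
proof
  show "orb t \<subseteq> f_map t ` orb t \<union> g_map t ` orb t"
  proof
    fix x assume "x \<in> orb t"
    then obtain n where n: "x \<in> Lv t n" unfolding orb_def by auto
    show "x \<in> f_map t ` orb t \<union> g_map t ` orb t"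
    proof (cases n)
      case 0
      then have "x = f_map t e1" using n by (simp add: f_e1)
      moreover have "e1 \<in> orb t" unfolding orb_def by (auto intro: exI[of _ 0])
      ultimately show ?thesis by blast
    next
      case (Suc m)
      then show ?thesis using n unfolding orb_def by auto
    qed
  qed
next
  show "f_map t ` orb t \<union> g_map t ` orb t \<subseteq> orb t"
  proof -
    have "\<And>y n. y \<in> Lv t n \<Longrightarrow> f_map t y \<in> Lv t (Suc n) \<and> g_map t y \<in> Lv t (Suc n)" by simp
    then show ?thesis unfolding orb_def by blast
  qed
qed

lemma e1_orb: "e1 \<in> orb t" unfolding orb_def by (auto intro: exI[of _ 0])

lemma closure_image_cont:
  fixes S :: "linf set" and h :: "linf \<Rightarrow> linf"
  assumes "compact (closure S)" "continuous_on UNIV h"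
  shows "closure (h ` S) = h ` closure S"
proof
  have "compact (h ` closure S)"
    by (rule compact_continuous_image) (use assms continuous_on_subset in blast)+
  then have "closed (h ` closure S)" by (rule compact_imp_closed)
  then show "closure (h ` S) \<subseteq> h ` closure S"
    by (intro closure_minimal) (auto intro: closure_subset[THEN subsetD])
next
  show "h ` closure S \<subseteq> closure (h ` S)"
    by (rule image_closure_subset[OF continuous_on_subset[OF assms(2)] closed_closure closure_subset]) simp
qed

lemma cl_orb_inv:
  assumes "0 \<le> t" "t < 1"
  shows "closure (orb t) = f_map t ` closure (orb t) \<union> g_map t ` closure (orb t)"
proof -
  have "closure (orb t) = closure (f_map t ` orb t) \<union> closure (g_map t ` orb t)"
    by (subst orb_eq) simp
  also have "\<dots> = f_map t ` closure (orb t) \<union> g_map t ` closure (orb t)"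
    using closure_image_cont[OF compact_cl_orb[OF assms] f_cont[of t UNIV]]
      closure_image_cont[OF compact_cl_orb[OF assms] g_cont[of t UNIV]] assms by simp
  finally show ?thesis .
qed

lemma infdist_lip:
  assumes "B \<noteq> {}" "0 \<le> r" "\<And>x y. dist (h x) (h y) \<le> r * dist x y"
  shows "infdist (h x) (h ` B) \<le> r * infdist x B"
proof (cases "r = 0")
  case True
  obtain b where b: "b \<in> B" using assms by auto
  have "infdist (h x) (h ` B) \<le> dist (h x) (h b)" using b by (intro infdist_le) auto
  also have "\<dots> \<le> 0" using assms(3)[of x b] True by simp
  finally show ?thesis using True by simp
next
  case False
  then have r: "0 < r" using assms by simp
  have "infdist (h x) (h ` B) / r \<le> infdist x B"
    unfolding infdist_notempty[OF assms(1)]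
  proof (rule cINF_greatest[OF assms(1)])
    fix b assume b: "b \<in> B"
    have "infdist (h x) (h ` B) \<le> r * dist x b"
      using b assms(3)[of x b] by (intro infdist_le2) auto
    then show "infdist (h x) (h ` B) / r \<le> dist x b" using r by (simp add: field_simps)
  qed
  then show ?thesis using r by (simp add: field_simps)
qed

lemma bdd_infdist:
  assumes "bounded A" "B \<noteq> {}"
  shows "bdd_above ((\<lambda>a. infdist a B) ` A)"
proof -
  obtain b where b: "b \<in> B" using assms by auto
  obtain e where e: "\<forall>y\<in>A. dist b y \<le> e" using assms(1) bounded_any_center by blast
  show ?thesis
  proof (rule bdd_aboveI2)
    fix a assume "a \<in> A"
    then show "infdist a B \<le> e" using e b by (intro infdist_le2) (auto simp: dist_commute)
  qed
qed

lemma ifs_sub: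
  fixes F G :: "'a::metric_space \<Rightarrow> 'a"
  assumes lipF: "\<And>x y. dist (F x) (F y) \<le> r * dist x y"
      and lipG: "\<And>x y. dist (G x) (G y) \<le> r * dist x y"
      and r: "0 \<le> r" "r < 1"
      and A: "bounded A" "A \<noteq> {}" "A \<subseteq> F ` A \<union> G ` A"
      and B: "closed B" "B \<noteq> {}" "F ` B \<subseteq> B" "G ` B \<subseteq> B"
  shows "A \<subseteq> B"
proof -
  define M where "M = (SUP a\<in>A. infdist a B)"
  have bdd: "bdd_above ((\<lambda>a. infdist a B) ` A)" by (rule bdd_infdist) (use A B in auto)
  have le: "infdist a B \<le> M" if "a \<in> A" for a
    unfolding M_def using bdd that by (rule cSUP_upper2) simp
  have "M \<le> r * M"
    unfolding M_def
  proof (rule cSUP_least[OF A(2)])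
    fix a assume a: "a \<in> A"
    then obtain a' where a': "a' \<in> A" "a = F a' \<or> a = G a'" using A(3) by auto
    have "r * infdist a' B \<le> r * M" using le[OF a'(1)] r by (intro mult_left_mono) auto
    moreover have "infdist a B \<le> r * infdist a' B"
    proof (cases "a = F a'")
      case True
      have "infdist (F a') B \<le> infdist (F a') (F ` B)" by (rule infdist_mono) (use B in auto)
      also have "\<dots> \<le> r * infdist a' B" by (rule infdist_lip) (use B r lipF in auto)
      finally show ?thesis using True by simp
    next
      case False
      then have "a = G a'" using a' by blast
      have "infdist (G a') B \<le> infdist (G a') (G ` B)" by (rule infdist_mono) (use B in auto)
      also have "\<dots> \<le> r * infdist a' B" by (rule infdist_lip) (use B r lipG in auto)
      finally show ?thesis using \<open>a = G a'\<close> by simp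
    qed
    ultimately show "infdist a B \<le> r * (SUP a\<in>A. infdist a B)" unfolding M_def by simp
  qed
  moreover have "0 \<le> M" using A(2) le infdist_nonneg by (meson ex_in_conv order_trans)
  ultimately have M0: "M = 0" using r by (smt (verit) mult_le_cancel_right1)
  show ?thesis
  proof
    fix a assume a: "a \<in> A"
    then have "infdist a B = 0" using le[OF a] M0 infdist_nonneg[of a B] by simp
    then show "a \<in> B" using in_closed_iff_infdist_zero[OF B(1) B(2)] by simp
  qed
qed

lemma attractor_eq:
  assumes "0 \<le> t" "t < 1"
  shows "attractor t = closure (orb t)"
  unfolding attractor_def
proof (rule the_equality)
  show "closure (orb t) \<noteq> {} \<and> compact (closure (orb t)) \<and>
        closure (orb t) = f_map t ` closure (orb t) \<union> g_map t ` closure (orb t)"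
    using e1_orb compact_cl_orb[OF assms] cl_orb_inv[OF assms] closure_subset by blast
next
  fix A assume A: "A \<noteq> {} \<and> compact A \<and> A = f_map t ` A \<union> g_map t ` A"
  let ?C = "closure (orb t)"
  have C: "?C \<noteq> {}" "compact ?C" "?C = f_map t ` ?C \<union> g_map t ` ?C"
    using e1_orb compact_cl_orb[OF assms] cl_orb_inv[OF assms] closure_subset by blast+
  have lf: "\<And>x y. dist (f_map t x) (f_map t y) \<le> t * dist x y" using f_dist assms by blast
  have lg: "\<And>x y. dist (g_map t x) (g_map t y) \<le> t * dist x y" using g_dist assms by blast
  have Acb: "closed A" "bounded A" using A compact_imp_bounded compact_imp_closed by auto
  have Ccb: "closed ?C" "bounded ?C" using C compact_imp_bounded by auto
  have Ae: "A \<noteq> {}" and Asub: "A \<subseteq> f_map t ` A \<union> g_map t ` A"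
    and Af: "f_map t ` A \<subseteq> A" and Ag: "g_map t ` A \<subseteq> A"
    using A by blast+
  have Csub: "?C \<subseteq> f_map t ` ?C \<union> g_map t ` ?C"
    and Cf: "f_map t ` ?C \<subseteq> ?C" and Cg: "g_map t ` ?C \<subseteq> ?C"
    using C(3) by blast+
  have "A \<subseteq> ?C"
    by (rule ifs_sub[OF lf lg assms Acb(2) Ae Asub Ccb(1) C(1) Cf Cg])
  moreover have "?C \<subseteq> A"
    by (rule ifs_sub[OF lf lg assms Ccb(2) C(1) Csub Acb(1) Ae Af Ag])
  ultimately show "A = ?C" by blast
qed




lemma Lv_rep:
  assumes "0 \<le> s" "s \<le> 1"
  shows "x \<in> Lv s n \<Longrightarrow> \<exists>m y. apply_bcontfun x K = (complex_of_real s * cis (pi / (2 * real (K + 1))))^m * y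
             \<and> cmod (y - complex_of_real (1 - s/4)) \<le> s/4"
proof (induction n arbitrary: x)
  case 0
  then have "apply_bcontfun x K = (complex_of_real s * cis (pi / (2 * real (K + 1))))^0 * 1" by simp
  moreover have "cmod (1 - complex_of_real (1 - s/4)) \<le> s/4"
  proof -
    have "1 - complex_of_real (1 - s/4) = complex_of_real (s/4)" by (simp add: of_real_diff)
    then show ?thesis using assms by simp
  qed
  ultimately show ?case by blast
next
  case (Suc n)
  then obtain y where y: "y \<in> Lv s n" and x: "x = f_map s y \<or> x = g_map s y" by auto
  show ?case
  proof (cases "x = f_map s y")
    case True
    define u where "u = complex_of_real (s/4) * apply_bcontfun y K + complex_of_real (1 - s/4)"
    have "apply_bcontfun x K = (complex_of_real s * cis (pi / (2 * real (K + 1))))^0 * u"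
      using True by (simp add: u_def)
    moreover have "cmod (u - complex_of_real (1 - s/4)) \<le> s/4"
    proof -
      have "cmod (u - complex_of_real (1 - s/4)) = s/4 * cmod (apply_bcontfun y K)"
        unfolding u_def using assms by (simp add: norm_mult)
      also have "\<dots> \<le> s/4 * 1" using Lv_coord[OF assms y] assms by (intro mult_left_mono) auto
      finally show ?thesis by simp
    qed
    ultimately show ?thesis by blast
  next
    case False
    then have xg: "x = g_map s y" using x by blast
    from Suc.IH[OF y] obtain m u where mu: "apply_bcontfun y K = (complex_of_real s * cis (pi / (2 * real (K + 1))))^m * u"
      "cmod (u - complex_of_real (1 - s/4)) \<le> s/4" by blast
    have "apply_bcontfun x K = (complex_of_real s * cis (pi / (2 * real (K + 1))))^Suc m * u"
      using xg mu(1) by (simp add: algebra_simps)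
    then show ?thesis using mu(2) by blast
  qed
qed

lemma far_point:
  assumes "0 \<le> s" "s < 1"
  shows "\<exists>K. \<forall>x\<in>attractor s. 3/4 \<le> cmod (apply_bcontfun x K + 1)"
proof -
  obtain M where M: "s^M < 1/4" using real_arch_pow_inv[of "1/4" s] assms by auto
  define K where "K = 2 * M"
  have orbb: "3/4 \<le> cmod (apply_bcontfun x K + 1)" if x: "x \<in> orb s" for x
  proof -
    from x obtain n where "x \<in> Lv s n" unfolding orb_def by auto
    from Lv_rep[OF assms(1) _ this, of K] assms obtain m y where
      my: "apply_bcontfun x K = (complex_of_real s * cis (pi / (2 * real (K + 1))))^m * y"
          "cmod (y - complex_of_real (1 - s/4)) \<le> s/4" by auto
    define c where "c = complex_of_real (1 - s/4)"
    define \<phi> where "\<phi> = real m * (pi / (2 * real (K + 1)))"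
    have xK: "apply_bcontfun x K = complex_of_real (s^m) * (cis \<phi> * y)"
    proof -
      have "cis (pi / (2 * real (K + 1)))^m = cis \<phi>" unfolding \<phi>_def by (rule Complex.DeMoivre)
      then show ?thesis using my(1) by (simp only: power_mult_distrib of_real_power mult.assoc)
    qed
    have ynorm: "cmod y \<le> 1"
    proof -
      have "cmod y \<le> cmod (y - c) + cmod c" using norm_triangle_ineq[of "y - c" c] by simp
      also have "\<dots> \<le> s/4 + (1 - s/4)"
      proof -
        have cc: "cmod c = 1 - s/4" unfolding c_def norm_of_real using assms by simp
        show ?thesis using my(2)[folded c_def] cc by linarith
      qed
      finally show ?thesis by simp
    qed
    show ?thesis
    proof (cases "M \<le> m")
      case True
      have sm: "s^m \<le> 1/4" using power_decreasing[OF True] assms M by (smt (verit))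
      have "cmod (apply_bcontfun x K) = s^m * cmod y"
        using assms by (simp add: xK norm_mult norm_power)
      also have "\<dots> \<le> 1/4 * 1" using sm ynorm assms by (intro mult_mono) auto
      finally have "cmod (apply_bcontfun x K) \<le> 1/4" by simp
      moreover have "1 \<le> cmod (apply_bcontfun x K + 1) + cmod (apply_bcontfun x K)"
        using norm_triangle_ineq4[of "apply_bcontfun x K + 1" "apply_bcontfun x K"] by simp
      ultimately show ?thesis by simp
    next
      case False
      have phi0: "0 \<le> \<phi>" unfolding \<phi>_def by simp
      have "real m * pi / (2 * real (K + 1)) \<le> pi / 3"
      proof -
        have "3 * real m \<le> 2 * real (K + 1)" using False unfolding K_def by simp
        then have "(3 * real m) * pi \<le> (2 * real (K + 1)) * pi"
          by (rule mult_right_mono) simp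
        then have "real m * pi * 3 \<le> pi * (2 * real (K + 1))" by (simp add: algebra_simps)
        then show ?thesis by (simp add: field_simps)
      qed
      then have phi3: "\<phi> \<le> pi / 3" unfolding \<phi>_def by simp
      have cphi: "1/2 \<le> cos \<phi>"
        using cos_monotone_0_pi_le[OF phi0 phi3] cos_60 by simp
      have f1: "Re (cis \<phi> * y) = Re (cis \<phi> * c) + Re (cis \<phi> * (y - c))"
        by (simp add: algebra_simps)
      have f2: "Re (cis \<phi> * c) = cos \<phi> * (1 - s/4)" unfolding c_def by simp
      have f3: "- (s/4) \<le> Re (cis \<phi> * (y - c))"
      proof -
        have "\<bar>Re (cis \<phi> * (y - c))\<bar> \<le> cmod (cis \<phi> * (y - c))" by (rule abs_Re_le_cmod)
        also have "\<dots> = cmod (y - c)" by (simp add: norm_mult)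
        finally show ?thesis using my(2) unfolding c_def by linarith
      qed
      have f4: "1/2 * (1 - s/4) \<le> cos \<phi> * (1 - s/4)"
        using cphi assms by (intro mult_right_mono) auto
      have e1: "1/2 * (1 - s/4) \<le> Re (cis \<phi> * c)" using f2 f4 by simp
      have e2: "1/2 * (1 - s/4) - s/4 \<le> Re (cis \<phi> * y)" using f1 e1 f3 by linarith
      have e3: "0 \<le> 1/2 * (1 - s/4) - s/4" using assms by simp
      have "0 \<le> Re (cis \<phi> * y)" using e2 e3 by linarith
      then have "0 \<le> Re (apply_bcontfun x K)" using assms by (simp add: xK)
      then have "1 \<le> Re (apply_bcontfun x K + 1)" by simp
      also have "\<dots> \<le> cmod (apply_bcontfun x K + 1)" by (rule complex_Re_le_cmod)
      finally show ?thesis by simp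
    qed
  qed
  have cont: "continuous_on UNIV (\<lambda>x::linf. apply_bcontfun x K)"
    by (rule lip_cont[of 1]) (simp_all add: dist_bounded)
  have "closed {x::linf. 3/4 \<le> cmod (apply_bcontfun x K + 1)}"
    by (intro closed_Collect_le continuous_intros cont)
  then have "closure (orb s) \<subseteq> {x. 3/4 \<le> cmod (apply_bcontfun x K + 1)}"
    using orbb by (intro closure_minimal) auto
  then show ?thesis using attractor_eq[OF assms] by auto
qed

lemma giter:
  "(g_map t ^^ m) e1 \<in> Lv t m \<and> apply_bcontfun ((g_map t ^^ m) e1) K = (complex_of_real t * cis (pi / (2 * real (K + 1))))^m"
  by (induction m) (auto simp: algebra_simps)




lemma attr_props:
  assumes "0 \<le> t" "t < 1"
  shows "attractor t \<noteq> {}" "bounded (attractor t)" "compact (attractor t)" "orb t \<subseteq> attractor t"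
proof -
  have eq: "attractor t = closure (orb t)" by (rule attractor_eq[OF assms])
  have c: "compact (attractor t)" unfolding eq by (rule compact_cl_orb[OF assms])
  have o: "orb t \<subseteq> attractor t" unfolding eq by (rule closure_subset)
  show "attractor t \<noteq> {}" using o e1_orb by blast
  show "bounded (attractor t)" using c by (rule compact_imp_bounded)
  show "compact (attractor t)" by (rule c)
  show "orb t \<subseteq> attractor t" by (rule o)
qed

lemma infdist_via:
  fixes a :: "'a::metric_space"
  assumes "B \<noteq> {}" "bounded B" "C \<noteq> {}"
  shows "infdist a C \<le> infdist a B + (SUP b\<in>B. infdist b C)"
proof -
  have bdd: "bdd_above ((\<lambda>b. infdist b C) ` B)" by (rule bdd_infdist) (use assms in auto)
  have "infdist a C - (SUP b\<in>B. infdist b C) \<le> infdist a B"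
    unfolding infdist_notempty[OF assms(1)]
  proof (rule cINF_greatest[OF assms(1)])
    fix b assume b: "b \<in> B"
    have "infdist a C \<le> infdist b C + dist a b" by (rule infdist_triangle)
    moreover have "infdist b C \<le> (SUP b\<in>B. infdist b C)" using bdd b by (rule cSUP_upper2) simp
    ultimately show "infdist a C - (SUP b\<in>B. infdist b C) \<le> dist a b" by simp
  qed
  then show ?thesis by simp
qed

lemma hd_sym: "hausdorff_dist A B = hausdorff_dist B A"
  unfolding hausdorff_dist_def by (simp add: max.commute)

lemma hd_tri:
  fixes A B C :: "'a::metric_space set"
  assumes A: "A \<noteq> {}" "bounded A" and B: "B \<noteq> {}" "bounded B" and C: "C \<noteq> {}" "bounded C"
  shows "hausdorff_dist A C \<le> hausdorff_dist A B + hausdorff_dist B C"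
proof -
  have bAB: "bdd_above ((\<lambda>a. infdist a B) ` A)" by (rule bdd_infdist) (use A B in auto)
  have bBA: "bdd_above ((\<lambda>a. infdist a A) ` B)" by (rule bdd_infdist) (use A B in auto)
  have bBC: "bdd_above ((\<lambda>a. infdist a C) ` B)" by (rule bdd_infdist) (use C B in auto)
  have bCB: "bdd_above ((\<lambda>a. infdist a B) ` C)" by (rule bdd_infdist) (use C B in auto)
  have h1: "(SUP a\<in>A. infdist a C) \<le> hausdorff_dist A B + hausdorff_dist B C"
  proof (rule cSUP_least[OF A(1)])
    fix a assume a: "a \<in> A"
    have "infdist a C \<le> infdist a B + (SUP b\<in>B. infdist b C)" by (rule infdist_via) (use B C in auto)
    moreover have "infdist a B \<le> hausdorff_dist A B"
      unfolding hausdorff_dist_def using cSUP_upper2[OF bAB a order_refl] by simp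
    moreover have "(SUP b\<in>B. infdist b C) \<le> hausdorff_dist B C"
      unfolding hausdorff_dist_def by simp
    ultimately show "infdist a C \<le> hausdorff_dist A B + hausdorff_dist B C" by simp
  qed
  have h2: "(SUP c\<in>C. infdist c A) \<le> hausdorff_dist A B + hausdorff_dist B C"
  proof (rule cSUP_least[OF C(1)])
    fix c assume c: "c \<in> C"
    have "infdist c A \<le> infdist c B + (SUP b\<in>B. infdist b A)" by (rule infdist_via) (use A B in auto)
    moreover have "infdist c B \<le> hausdorff_dist B C"
      unfolding hausdorff_dist_def using cSUP_upper2[OF bCB c order_refl] by simp
    moreover have "(SUP b\<in>B. infdist b A) \<le> hausdorff_dist A B"
      unfolding hausdorff_dist_def by simp
    ultimately show "infdist c A \<le> hausdorff_dist A B + hausdorff_dist B C" by simp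
  qed
  show ?thesis using h1 h2 unfolding hausdorff_dist_def[of A C] by simp
qed

lemma part2:
  assumes s: "s \<in> {1/2..<1}"
  shows "\<exists>t0<1. \<forall>t\<in>{t0..<1}. hausdorff_dist (attractor t) (attractor s) \<ge> 1/2"
proof -
  have s0: "0 \<le> s" "s < 1" using s by auto
  obtain K where K: "\<forall>x\<in>attractor s. 3/4 \<le> cmod (apply_bcontfun x K + 1)"
    using far_point[OF s0] by blast
  define n where "n = 2 * (K + 1)"
  define t0 :: real where "t0 = 1 - 1 / (4 * real n)"
  have n2: "2 \<le> real n" unfolding n_def by simp
  have "t0 < 1" unfolding t0_def using n2 by simp
  moreover have "hausdorff_dist (attractor t) (attractor s) \<ge> 1/2" if t: "t \<in> {t0..<1}" for t
  proof -
    have "1 / (4 * real n) \<le> 1" using n2 by simp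
    then have t0: "0 \<le> t" "t < 1" using t unfolding t0_def by auto
    define p where "p = (g_map t ^^ n) e1"
    have pA: "p \<in> attractor t"
      using giter[where t=t and m=n and K=K] attr_props(4)[OF t0] unfolding p_def orb_def by blast
    have "real n * (pi / (2 * real (K + 1))) = pi" unfolding n_def by simp
    then have pK: "apply_bcontfun p K = - complex_of_real (t^n)"
      using giter[where t=t and m=n and K=K] unfolding p_def
      by (simp add: power_mult_distrib Complex.DeMoivre)
    have tn: "3/4 \<le> t^n" "t^n \<le> 1"
    proof -
      have "1 + real n * (t - 1) \<le> (1 + (t - 1))^n" by (rule Bernoulli_inequality) (use t0 in simp)
      moreover have "real n * (1 - t) \<le> real n * (1 / (4 * real n))"
        using t unfolding t0_def by (intro mult_left_mono) auto
      moreover have "real n * (1 / (4 * real n)) = 1/4" using n2 by simp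
      ultimately show "3/4 \<le> t^n" by (simp add: algebra_simps)
      show "t^n \<le> 1" using t0 by (simp add: power_le_one)
    qed
    have far: "1/2 \<le> dist p x" if x: "x \<in> attractor s" for x
    proof -
      have "cmod (apply_bcontfun x K + 1) \<le> cmod (apply_bcontfun x K + complex_of_real (t^n)) + cmod (1 - complex_of_real (t^n))"
        using norm_triangle_ineq[of "apply_bcontfun x K + complex_of_real (t^n)" "1 - complex_of_real (t^n)"] by simp
      moreover have "cmod (1 - complex_of_real (t^n)) = 1 - t^n"
      proof -
        have "1 - complex_of_real (t^n) = complex_of_real (1 - t^n)" by simp
        then show ?thesis using tn by (simp only: norm_of_real)
      qed
      moreover have "dist (apply_bcontfun p K) (apply_bcontfun x K) = cmod (apply_bcontfun x K + complex_of_real (t^n))"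
        unfolding pK dist_norm by (simp add: norm_minus_commute add.commute)
      moreover have "dist (apply_bcontfun p K) (apply_bcontfun x K) \<le> dist p x" by (rule dist_bounded)
      ultimately show ?thesis using K x tn by force
    qed
    have Ane: "attractor s \<noteq> {}" using attr_props(1)[OF s0] .
    have "1/2 \<le> infdist p (attractor s)"
      unfolding infdist_notempty[OF Ane] by (rule cINF_greatest[OF Ane]) (rule far)
    also have "\<dots> \<le> (SUP a\<in>attractor t. infdist a (attractor s))"
      by (rule cSUP_upper2[OF bdd_infdist[OF attr_props(2)[OF t0] Ane] pA]) simp
    also have "\<dots> \<le> hausdorff_dist (attractor t) (attractor s)"
      unfolding hausdorff_dist_def by simp
    finally show ?thesis .
  qed
  ultimately show ?thesis by blast
qed




theorem mainTheorem14:
  shows "(\<nexists>tn :: nat \<Rightarrow> real. (\<forall>n. tn n \<in> {0..<1}) \<and> tn \<longlonglongrightarrow> 1 \<and>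
            (\<exists>K. K \<noteq> {} \<and> compact K \<and>
                 (\<lambda>n. hausdorff_dist (attractor (tn n)) K) \<longlonglongrightarrow> 0))
      \<and> (\<forall>s\<in>{1/2..<1}. \<exists>t0<1. \<forall>t\<in>{t0..<1}.
            hausdorff_dist (attractor t) (attractor s) \<ge> 1/2)"
proof
  show "\<forall>s\<in>{1/2..<1}. \<exists>t0<1. \<forall>t\<in>{t0..<1}. hausdorff_dist (attractor t) (attractor s) \<ge> 1/2"
    using part2 by blast
next
  show "\<nexists>tn :: nat \<Rightarrow> real. (\<forall>n. tn n \<in> {0..<1}) \<and> tn \<longlonglongrightarrow> 1 \<and>
            (\<exists>K. K \<noteq> {} \<and> compact K \<and>
                 (\<lambda>n. hausdorff_dist (attractor (tn n)) K) \<longlonglongrightarrow> 0)"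
  proof
    assume "\<exists>tn :: nat \<Rightarrow> real. (\<forall>n. tn n \<in> {0..<1}) \<and> tn \<longlonglongrightarrow> 1 \<and>
            (\<exists>K. K \<noteq> {} \<and> compact K \<and>
                 (\<lambda>n. hausdorff_dist (attractor (tn n)) K) \<longlonglongrightarrow> 0)"
    then obtain tn :: "nat \<Rightarrow> real" and K where tn: "\<And>n. tn n \<in> {0..<1}" "tn \<longlonglongrightarrow> 1"
      and K: "K \<noteq> {}" "compact K" and h: "(\<lambda>n. hausdorff_dist (attractor (tn n)) K) \<longlonglongrightarrow> 0"
      by blast
    have Kb: "bounded K" using K(2) by (rule compact_imp_bounded)
    have ev1: "\<forall>\<^sub>F n in sequentially. 1/2 < tn n" using order_tendstoD(1)[OF tn(2), of "1/2"] by simp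
    have ev2: "\<forall>\<^sub>F n in sequentially. hausdorff_dist (attractor (tn n)) K < 1/4"
      using order_tendstoD(2)[OF h, of "1/4"] by simp
    obtain N where N: "1/2 < tn N" "hausdorff_dist (attractor (tn N)) K < 1/4"
      using eventually_happens'[OF _ eventually_conj[OF ev1 ev2]] by auto
    define s where "s = tn N"
    have s: "s \<in> {1/2..<1}" using N tn(1)[of N] unfolding s_def by auto
    obtain t0 where t0: "t0 < 1" "\<forall>t\<in>{t0..<1}. hausdorff_dist (attractor t) (attractor s) \<ge> 1/2"
      using part2[OF s] by blast
    have ev3: "\<forall>\<^sub>F n in sequentially. t0 < tn n" using order_tendstoD(1)[OF tn(2) t0(1)] .
    obtain n where n: "t0 < tn n" "hausdorff_dist (attractor (tn n)) K < 1/4"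
      using eventually_happens'[OF _ eventually_conj[OF ev3 ev2]] by auto
    have tn0: "0 \<le> tn n" "tn n < 1" using tn(1)[of n] by auto
    have s0: "0 \<le> s" "s < 1" using s by auto
    have "1/2 \<le> hausdorff_dist (attractor (tn n)) (attractor s)"
      using t0(2) n(1) tn0 by auto
    also have "\<dots> \<le> hausdorff_dist (attractor (tn n)) K + hausdorff_dist K (attractor s)"
      by (rule hd_tri) (use attr_props[OF tn0] attr_props[OF s0] K Kb in auto)
    also have "hausdorff_dist K (attractor s) = hausdorff_dist (attractor s) K" by (rule hd_sym)
    finally show False using n(2) N(2) unfolding s_def by simp
  qed
qed


end
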